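(* Let $m,n\ge0$ be integers and let $\lambda$ be an almost $(m|n)$-cross bipartition. (i) $|\lambda|=(m+1)(n+1)$. In particular, all almost $(m|n)$-cross bipartitions have the same size. (ii) For any integers $m',n'$ with $0\le m'\le m$ and $0\le n'\le n$, there exists an almost $(m'|n')$-cross bipartition $\mu$ with $\mu\subset\lambda$.
   Context: A partition is a weakly decreasing sequence $\alpha=(\alpha_1,\alpha_2,\dots)$ of nonnegative integers, almost all zero, with size $|\alpha|=\sum_i\alpha_i$. A bipartition is a pair $\lambda=(\lambda^\bullet,\lambda^\circ)$ of partitions, with size $|\lambda|=|\lambda^\bullet|+|\lambda^\circ|$. Containment is componentwise: $\mu\subset\lambda$ iff $\mu^\bullet_i\le\lambda^\bullet_i$ and $\mu^\circ_i\le\lambda^\circ_i$ for all $i$. A bipartition $\lambda$ is $(m|n)$-cross if there exists $k$ with $0\le k\le m$ such that $\lambda^\bullet_{k+1}+\lambda^\circ_{m-k+1}\le n$. It is almost $(m|n)$-cross if it is not $(m|n)$-cross but every bipartition strictly contained in it is $(m|n)$-cross. *)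

theory Defs
  imports Main
begin

text \<open>A partition is represented as a function nat => nat, indexed from 0:
  the paper's alpha_i (i >= 1) is our a (i - 1).\<close>

definition is_partition :: "(nat \<Rightarrow> nat) \<Rightarrow> bool" where
  "is_partition a \<longleftrightarrow> (\<forall>i. a (Suc i) \<le> a i) \<and> finite {i. a i \<noteq> 0}"

definition psize :: "(nat \<Rightarrow> nat) \<Rightarrow> nat" where
  "psize a = (\<Sum>i\<in>{i. a i \<noteq> 0}. a i)"

type_synonym bipartition = "(nat \<Rightarrow> nat) \<times> (nat \<Rightarrow> nat)"

definition is_bipartition :: "bipartition \<Rightarrow> bool" where
  "is_bipartition l \<longleftrightarrow> is_partition (fst l) \<and> is_partition (snd l)"

definition bsize :: "bipartition \<Rightarrow> nat" where
  "bsize l = psize (fst l) + psize (snd l)"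

definition bcontained :: "bipartition \<Rightarrow> bipartition \<Rightarrow> bool" where
  "bcontained mu l \<longleftrightarrow> (\<forall>i. fst mu i \<le> fst l i \<and> snd mu i \<le> snd l i)"

text \<open>(m|n)-cross: exists k <= m with lambda-bullet_(k+1) + lambda-circ_(m-k+1) <= n
  (0-indexed: fst l k + snd l (m - k)).\<close>
definition is_cross :: "nat \<Rightarrow> nat \<Rightarrow> bipartition \<Rightarrow> bool" where
  "is_cross m n l \<longleftrightarrow> (\<exists>k\<le>m. fst l k + snd l (m - k) \<le> n)"

definition almost_cross :: "nat \<Rightarrow> nat \<Rightarrow> bipartition \<Rightarrow> bool" where
  "almost_cross m n l \<longleftrightarrow> is_bipartition l \<and> \<not> is_cross m n l \<and>
     (\<forall>mu. is_bipartition mu \<and> bcontained mu l \<and> mu \<noteq> l \<longrightarrow> is_cross m n mu)"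

end

theory Submission
  imports Defs
begin

lemma part_mono: "is_partition a \<Longrightarrow> i \<le> j \<Longrightarrow> a j \<le> a i"
  unfolding is_partition_def by (auto intro: lift_Suc_antimono_le[of a])

lemma part_dec:
  assumes "is_partition a" "a (Suc p) < a p"
  shows "is_partition (a(p := a p - 1))"
proof -
  have m: "\<forall>i. a (Suc i) \<le> a i" and f: "finite {i. a i \<noteq> 0}"
    using assms(1) unfolding is_partition_def by auto
  have "\<forall>i. (a(p := a p - 1)) (Suc i) \<le> (a(p := a p - 1)) i"
  proof
    fix i show "(a(p := a p - 1)) (Suc i) \<le> (a(p := a p - 1)) i"
      using m[rule_format, of i] m[rule_format, of p] assms(2) by (cases "i = p"; cases "Suc i = p") auto
  qed
  moreover have "finite {i. (a(p := a p - 1)) i \<noteq> 0}"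
    by (rule finite_subset[OF _ f]) auto
  ultimately show ?thesis unfolding is_partition_def by blast
qed

lemma cross_swap: "is_cross m n (b, a) \<longleftrightarrow> is_cross m n (a, b)"
proof
  assume "is_cross m n (b, a)"
  then obtain k where "k \<le> m" "b k + a (m - k) \<le> n" unfolding is_cross_def by auto
  then show "is_cross m n (a, b)" unfolding is_cross_def
    by (intro exI[of _ "m - k"]) (auto simp: add.commute)
next
  assume "is_cross m n (a, b)"
  then obtain k where "k \<le> m" "a k + b (m - k) \<le> n" unfolding is_cross_def by auto
  then show "is_cross m n (b, a)" unfolding is_cross_def
    by (intro exI[of _ "m - k"]) (auto simp: add.commute)
qed

lemma almost_swap:
  assumes "almost_cross m n (a, b)"
  shows "almost_cross m n (b, a)"
proof -
  have "is_bipartition (b, a)" using assms unfolding almost_cross_def is_bipartition_def by auto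
  moreover have "\<not> is_cross m n (b, a)" using assms cross_swap unfolding almost_cross_def by blast
  moreover have "is_cross m n mu" if "is_bipartition mu" "bcontained mu (b, a)" "mu \<noteq> (b, a)" for mu
  proof -
    obtain c d where mu: "mu = (c, d)" by force
    have "is_bipartition (d, c)" using that mu unfolding is_bipartition_def by auto
    moreover have "bcontained (d, c) (a, b)" using that mu unfolding bcontained_def by auto
    moreover have "(d, c) \<noteq> (a, b)" using that mu by auto
    ultimately have "is_cross m n (d, c)" using assms unfolding almost_cross_def by blast
    then show ?thesis using mu cross_swap by blast
  qed
  ultimately show ?thesis unfolding almost_cross_def by blast
qed

lemma zero_beyond_a:
  assumes A: "almost_cross m n (a, b)" and i: "m < i"
  shows "a i = 0"
proof (rule ccontr)
  assume ai: "a i \<noteq> 0"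
  have pa: "is_partition a" using A unfolding almost_cross_def is_bipartition_def by auto
  define S where "S = {i. a i \<noteq> 0}"
  have fS: "finite S" using pa unfolding is_partition_def S_def by auto
  define p where "p = Max S"
  have "i \<in> S" using ai S_def by auto
  hence ip: "i \<le> p" and pS: "p \<in> S" using fS p_def by (auto intro: Max_ge Max_in)
  have "Suc p \<notin> S" using fS p_def by (metis Max_ge Suc_n_not_le_n)
  hence "a (Suc p) < a p" using pS S_def by auto
  hence pa': "is_partition (a(p := a p - 1))" using part_dec pa by blast
  have "is_bipartition (a(p := a p - 1), b)"
    using pa' A unfolding almost_cross_def is_bipartition_def by auto
  moreover have "bcontained (a(p := a p - 1), b) (a, b)" unfolding bcontained_def by auto
  moreover have "(a(p := a p - 1), b) \<noteq> (a, b)" using pS S_def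
    by (auto dest: fun_cong[of _ _ p])
  ultimately have "is_cross m n (a(p := a p - 1), b)" using A unfolding almost_cross_def by blast
  then obtain k where "k \<le> m" "(a(p := a p - 1)) k + b (m - k) \<le> n" unfolding is_cross_def by auto
  moreover have "k \<noteq> p" using \<open>k \<le> m\<close> i ip by auto
  ultimately have "is_cross m n (a, b)" unfolding is_cross_def by auto
  then show False using A unfolding almost_cross_def by blast
qed

lemma zero_beyond_b:
  assumes A: "almost_cross m n (a, b)" and i: "m < i"
  shows "b i = 0"
  using zero_beyond_a[OF almost_swap[OF A] i] .

lemma tight_le:
  assumes A: "almost_cross m n (a, b)" and k: "k \<le> m" and ak: "0 < a k"
  shows "a k + b (m - k) \<le> n + 1"
proof (rule ccontr)
  assume big: "\<not> a k + b (m - k) \<le> n + 1"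
  have pa: "is_partition a" and pb: "is_partition b"
    using A unfolding almost_cross_def is_bipartition_def by auto
  define S where "S = {i. a i = a k}"
  have fS: "finite S" using pa ak unfolding is_partition_def S_def
    by (auto elim: finite_subset[rotated])
  define p where "p = Max S"
  have "k \<in> S" using S_def by auto
  hence kp: "k \<le> p" and pS: "p \<in> S" using fS p_def by (auto intro: Max_ge Max_in)
  have "Suc p \<notin> S" using fS p_def by (metis Max_ge Suc_n_not_le_n)
  moreover have "a (Suc p) \<le> a p" using pa unfolding is_partition_def by auto
  ultimately have lt: "a (Suc p) < a p" using pS S_def by auto
  have pm: "p \<le> m"
  proof (rule ccontr)
    assume "\<not> p \<le> m" hence "a p = 0" using zero_beyond_a[OF A] by auto
    then show False using pS S_def ak by auto
  qed
  have pa': "is_partition (a(p := a p - 1))" using part_dec pa lt by blast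
  have "is_bipartition (a(p := a p - 1), b)"
    using pa' pb unfolding is_bipartition_def by auto
  moreover have "bcontained (a(p := a p - 1), b) (a, b)" unfolding bcontained_def by auto
  moreover have "(a(p := a p - 1), b) \<noteq> (a, b)" using pS S_def ak
    by (auto dest: fun_cong[of _ _ p])
  ultimately have "is_cross m n (a(p := a p - 1), b)" using A unfolding almost_cross_def by blast
  then obtain k' where k': "k' \<le> m" "(a(p := a p - 1)) k' + b (m - k') \<le> n" unfolding is_cross_def by auto
  show False
  proof (cases "k' = p")
    case True
    have "b (m - k) \<le> b (m - p)" using part_mono[OF pb] kp pm by auto
    then show ?thesis using k' True pS S_def big by auto
  next
    case False
    then have "is_cross m n (a, b)" using k' unfolding is_cross_def by auto
    then show False using A unfolding almost_cross_def by blast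
  qed
qed

lemma tight:
  assumes A: "almost_cross m n (a, b)" and k: "k \<le> m"
  shows "a k + b (m - k) = n + 1"
proof -
  have "\<not> a k + b (m - k) \<le> n" using A k unfolding almost_cross_def is_cross_def by auto
  moreover have "a k + b (m - k) \<le> n + 1"
  proof (cases "0 < a k")
    case True then show ?thesis using tight_le[OF A k] by auto
  next
    case False
    show ?thesis
    proof (cases "0 < b (m - k)")
      case True
      have "b (m - k) + a (m - (m - k)) \<le> n + 1"
        using tight_le[OF almost_swap[OF A] _ True] by auto
      then show ?thesis using k by (simp add: add.commute)
    next
      case False2: False
      then show ?thesis using False by auto
    qed
  qed
  ultimately show ?thesis by auto
qed

lemma psize_trunc:
  assumes "\<forall>i>m. a i = 0"
  shows "psize a = sum a {..<Suc m}"
  unfolding psize_def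
proof -
  have "{i. a i \<noteq> 0} \<subseteq> {..<Suc m}"
  proof
    fix i assume "i \<in> {i. a i \<noteq> 0}"
    then have "\<not> m < i" using assms by auto
    then show "i \<in> {..<Suc m}" by auto
  qed
  then show "sum a {i. a i \<noteq> 0} = sum a {..<Suc m}"
    by (intro sum.mono_neutral_left) auto
qed

lemma size_almost:
  assumes A: "almost_cross m n (a, b)"
  shows "bsize (a, b) = (m + 1) * (n + 1)"
proof -
  have "psize a = sum a {..<Suc m}" using zero_beyond_a[OF A] psize_trunc by blast
  moreover have "psize b = sum b {..<Suc m}" using zero_beyond_b[OF A] psize_trunc by blast
  moreover have "sum b {..<Suc m} = (\<Sum>i<Suc m. b (m - i))"
    using sum.nat_diff_reindex[of b "Suc m"] by simp
  moreover have "(\<Sum>i<Suc m. a i + b (m - i)) = (\<Sum>i<Suc m. n + 1)"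
    using tight[OF A] by (intro sum.cong) auto
  ultimately show ?thesis unfolding bsize_def by (simp add: sum.distrib)
qed

lemma almost_char:
  assumes "is_bipartition (c, d)" "\<forall>k>m. c k = 0 \<and> d k = 0"
    "\<forall>k\<le>m. c k + d (m - k) = n + 1"
  shows "almost_cross m n (c, d)"
proof -
  have "\<not> is_cross m n (c, d)" using assms(3) unfolding is_cross_def by auto
  moreover have "is_cross m n mu" if "is_bipartition mu" "bcontained mu (c, d)" "mu \<noteq> (c, d)" for mu
  proof -
    obtain e f where mu: "mu = (e, f)" by force
    have le: "\<forall>i. e i \<le> c i \<and> f i \<le> d i" using that mu unfolding bcontained_def by auto
    have "e \<noteq> c \<or> f \<noteq> d" using that mu by auto
    then obtain i where "e i < c i \<or> f i < d i" using le by (metis ext le_neq_implies_less)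
    then show ?thesis
    proof
      assume h: "e i < c i"
      then have "i \<le> m" using assms(2) by (metis not_le not_less0)
      moreover have "f (m - i) \<le> d (m - i)" using le by blast
      ultimately have "e i + f (m - i) \<le> n" using h assms(3)[rule_format, of i] by linarith
      then show ?thesis using mu \<open>i \<le> m\<close> unfolding is_cross_def by auto
    next
      assume h: "f i < d i"
      then have im: "i \<le> m" using assms(2) by (metis not_le not_less0)
      then have "c (m - i) + d i = n + 1" using assms(3)[rule_format, of "m - i"] by simp
      moreover have "e (m - i) \<le> c (m - i)" using le by blast
      moreover have "m - (m - i) = i" using im by simp
      ultimately have "e (m - i) + f i \<le> n" using h by linarith
      then have "e (m - i) + f (m - (m - i)) \<le> n" using im by simp
      then show ?thesis using mu unfolding is_cross_def by (intro exI[of _ "m - i"]) auto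
    qed
  qed
  ultimately show ?thesis using assms(1) unfolding almost_cross_def by blast
qed

lemma sub_almost:
  assumes A: "almost_cross m n (a, b)" and mm: "m' \<le> m" and nn: "n' \<le> n"
  shows "\<exists>mu. almost_cross m' n' mu \<and> bcontained mu (a, b)"
proof -
  have pa: "is_partition a" and pb: "is_partition b"
    using A unfolding almost_cross_def is_bipartition_def by auto
  define c where "c k = (if k \<le> m' then min (a k) (n' + 1) else 0)" for k
  define d where "d j = (if j \<le> m' then n' + 1 - min (a (m' - j)) (n' + 1) else 0)" for j
  have mono_a: "\<And>i j. i \<le> j \<Longrightarrow> a j \<le> a i" using part_mono[OF pa] by blast
  have pc: "is_partition c" unfolding is_partition_def
  proof
    show "\<forall>i. c (Suc i) \<le> c i"
    proof
      fix i
      have "a (Suc i) \<le> a i" using mono_a by simp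
      then show "c (Suc i) \<le> c i" unfolding c_def by (auto simp: min_def)
    qed
    show "finite {i. c i \<noteq> 0}" by (rule finite_subset[of _ "{..m'}"]) (auto simp: c_def split: if_splits)
  qed
  have pd: "is_partition d" unfolding is_partition_def
  proof
    show "\<forall>i. d (Suc i) \<le> d i"
    proof
      fix i
      show "d (Suc i) \<le> d i"
      proof (cases "Suc i \<le> m'")
        case True
        have "a (m' - i) \<le> a (m' - Suc i)" using mono_a by auto
        then show ?thesis using True unfolding d_def by (auto simp: min_def)
      qed (simp add: d_def)
    qed
    show "finite {i. d i \<noteq> 0}" by (rule finite_subset[of _ "{..m'}"]) (auto simp: d_def split: if_splits)
  qed
  have "almost_cross m' n' (c, d)"
  proof (rule almost_char)
    show "is_bipartition (c, d)" using pc pd unfolding is_bipartition_def by auto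
    show "\<forall>k>m'. c k = 0 \<and> d k = 0" unfolding c_def d_def by auto
    show "\<forall>k\<le>m'. c k + d (m' - k) = n' + 1" unfolding c_def d_def by (auto simp: min_def)
  qed
  moreover have "bcontained (c, d) (a, b)" unfolding bcontained_def
  proof (intro allI conjI)
    fix i
    show "fst (c, d) i \<le> fst (a, b) i" by (auto simp: c_def)
    show "snd (c, d) i \<le> snd (a, b) i"
    proof (cases "i \<le> m'")
      case True
      have t: "a (m - i) + b i = n + 1" using tight[OF A, of "m - i"] True mm by auto
      have "a (m - i) \<le> a (m' - i)" using mono_a True mm by auto
      then show ?thesis using True t nn by (auto simp: d_def min_def)
    qed (simp add: d_def)
  qed
  ultimately show ?thesis by blast
qed

theorem proposition2p6:
  fixes m n :: nat and l :: bipartition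
  assumes "almost_cross m n l"
  shows "bsize l = (m + 1) * (n + 1)
    \<and> (\<forall>l'. almost_cross m n l' \<longrightarrow> bsize l' = bsize l)
    \<and> (\<forall>m' n'. m' \<le> m \<and> n' \<le> n \<longrightarrow>
         (\<exists>mu. almost_cross m' n' mu \<and> bcontained mu l))"
proof -
  have sz: "\<And>l. almost_cross m n l \<Longrightarrow> bsize l = (m + 1) * (n + 1)"
    by (metis prod.collapse size_almost)
  show ?thesis using sz[OF assms] sz sub_almost assms by (metis prod.collapse)
qed

end
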